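(* Let $m\geq 3$, let $\mathcal{S}$ be a locating-dominating set of the grid graph $G_{3,m}=P_3\square P_m$, and let $\mathcal{B}$ be a $(3\times 3)$-block of $G_{3,m}$. Then $|\mathcal{B}\cap\mathcal{S}|\geq 2$.
   Context: $P_n$ is the path on $n$ vertices, $\square$ the Cartesian product of graphs, and $G_{n,m}=P_n\square P_m$ is viewed as a grid with $n$ rows and $m$ columns. A $(n\times \ell)$-block of $G_{n,m}$ is the set of vertices in $\ell$ consecutive columns. For $C\subseteq V(G)$ and $v\in V(G)$ let $I(v)=N[v]\cap C$ ($N[v]$ the closed neighborhood). $C$ is a locating-dominating set if $I(v)\neq\emptyset$ for all $v\in V(G)\setminus C$ and $I(u)\neq I(v)$ for all distinct $u,v\in V(G)\setminus C$. *)

theory Defs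
  imports Main
begin

text \<open>Grid graph G_{n,m} = P_n \<box> P_m: vertices (i,j) with row i < n, column j < m
  (0-indexed); two vertices adjacent iff they differ by 1 in exactly one coordinate.\<close>

definition grid_vertices :: "nat \<Rightarrow> nat \<Rightarrow> (nat \<times> nat) set" where
  "grid_vertices n m = {(i, j). i < n \<and> j < m}"

definition grid_adj :: "nat \<times> nat \<Rightarrow> nat \<times> nat \<Rightarrow> bool" where
  "grid_adj u v \<longleftrightarrow>
     (fst u = fst v \<and> (snd u = snd v + 1 \<or> snd v = snd u + 1)) \<or>
     (snd u = snd v \<and> (fst u = fst v + 1 \<or> fst v = fst u + 1))"

definition grid_closed_nbhd :: "nat \<Rightarrow> nat \<Rightarrow> nat \<times> nat \<Rightarrow> (nat \<times> nat) set" where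
  "grid_closed_nbhd n m v = {u \<in> grid_vertices n m. u = v \<or> grid_adj u v}"

definition locating_dominating :: "nat \<Rightarrow> nat \<Rightarrow> (nat \<times> nat) set \<Rightarrow> bool" where
  "locating_dominating n m C \<longleftrightarrow>
     C \<subseteq> grid_vertices n m \<and>
     (\<forall>v \<in> grid_vertices n m - C. grid_closed_nbhd n m v \<inter> C \<noteq> {}) \<and>
     (\<forall>u \<in> grid_vertices n m - C. \<forall>v \<in> grid_vertices n m - C.
        u \<noteq> v \<longrightarrow> grid_closed_nbhd n m u \<inter> C \<noteq> grid_closed_nbhd n m v \<inter> C)"

definition grid_block :: "nat \<Rightarrow> nat \<Rightarrow> nat \<Rightarrow> nat \<Rightarrow> (nat \<times> nat) set" where
  "grid_block n m l k = {(i, j). i < n \<and> k \<le> j \<and> j < k + l \<and> j < m}"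

end

theory Submission
  imports Defs
begin

lemma nbhd_sub_block:
  assumes "i < 3" "k + 3 \<le> m"
  shows "grid_closed_nbhd 3 m (i, k+1) \<subseteq> grid_block 3 m 3 k"
  using assms by (auto simp: grid_closed_nbhd_def grid_block_def grid_vertices_def grid_adj_def)

theorem lemma4p10:
  fixes m k :: nat and S :: "(nat \<times> nat) set"
  assumes "m \<ge> 3"
    and "locating_dominating 3 m S"
    and "k + 3 \<le> m"
  shows "card (grid_block 3 m 3 k \<inter> S) \<ge> 2"
proof (rule ccontr)
  let ?B = "grid_block 3 m 3 k \<inter> S"
  assume "\<not> 2 \<le> card ?B"
  hence c: "card ?B \<le> 1" by simp
  have fin: "finite ?B"
    by (rule finite_subset[of _ "{0..<3} \<times> {0..<m}"]) (auto simp: grid_block_def)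
  obtain x where Bx: "?B \<subseteq> {x}"
  proof (cases "card ?B = 0")
    case True thus ?thesis using fin that by auto
  next
    case False
    hence "card ?B = 1" using c by linarith
    then obtain y where "?B = {y}" by (rule card_1_singletonE)
    thus ?thesis using that by auto
  qed
  have ld: "\<And>v. v \<in> grid_vertices 3 m - S \<Longrightarrow> grid_closed_nbhd 3 m v \<inter> S \<noteq> {}"
    and ld2: "\<And>u v. u \<in> grid_vertices 3 m - S \<Longrightarrow> v \<in> grid_vertices 3 m - S \<Longrightarrow> u \<noteq> v
      \<Longrightarrow> grid_closed_nbhd 3 m u \<inter> S \<noteq> grid_closed_nbhd 3 m v \<inter> S"
    using assms(2) unfolding locating_dominating_def by blast+
  have key: "grid_closed_nbhd 3 m (i, k+1) \<inter> S = {x}"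
    if "i < 3" "(i, k+1) \<notin> S" for i
  proof -
    have "(i, k+1) \<in> grid_vertices 3 m" using that assms(3) by (auto simp: grid_vertices_def)
    hence ne: "grid_closed_nbhd 3 m (i, k+1) \<inter> S \<noteq> {}" using ld that by blast
    have "grid_closed_nbhd 3 m (i, k+1) \<inter> S \<subseteq> {x}"
      using nbhd_sub_block[OF that(1) assms(3)] Bx by blast
    thus ?thesis using ne by blast
  qed
  have V: "\<And>i. i < 3 \<Longrightarrow> (i, k+1) \<in> grid_vertices 3 m" using assms(3) by (auto simp: grid_vertices_def)
  obtain i j where ij: "i < 3" "j < 3" "i \<noteq> j" "(i, k+1) \<notin> S" "(j, k+1) \<notin> S"
  proof -
    have "(i, k+1) \<in> ?B" if "(i, k+1) \<in> S" "i < 3" for i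
      using that assms(3) by (auto simp: grid_block_def)
    hence xx: "\<And>i. i < 3 \<Longrightarrow> (i, k+1) \<in> S \<Longrightarrow> (i, k+1) = x" using Bx by blast
    have "\<And>i j. i < 3 \<Longrightarrow> j < 3 \<Longrightarrow> (i, k+1) \<in> S \<Longrightarrow> (j, k+1) \<in> S \<Longrightarrow> i = j"
    proof -
      fix i j assume a: "i < (3::nat)" "j < 3" "(i, k+1) \<in> S" "(j, k+1) \<in> S"
      have "(i, k+1) = x" "(j, k+1) = x" using a xx by blast+
      thus "i = j" by (metis prod.inject)
    qed
    hence u: "\<And>i j. i < 3 \<Longrightarrow> j < 3 \<Longrightarrow> i \<noteq> j \<Longrightarrow> (i, k+1) \<in> S \<Longrightarrow> (j, k+1) \<notin> S" by blast
    show ?thesis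
    proof (cases "(0, k+1) \<in> S")
      case True
      thus ?thesis using u[of 0 1] u[of 0 2] that[of 1 2] by simp
    next
      case F0: False
      show ?thesis
      proof (cases "(1, k+1) \<in> S")
        case True
        thus ?thesis using u[of 1 2] F0 that[of 0 2] by simp
      next
        case False
        thus ?thesis using F0 that[of 0 1] by simp
      qed
    qed
  qed
  show False using ld2[of "(i, k+1)" "(j, k+1)"] key[OF ij(1,4)] key[OF ij(2,5)] V ij by blast
qed

end
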